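(* Let $k$ be a field of characteristic zero, let $n\ge 1$, and let $R$ denote either $k[x_1,\ldots,x_n]$ or $k[[x_1,\ldots,x_n]]$. Let $\mathfrak{D}$ be a set of pairwise commuting $k$-derivations of $R$ such that $R$ is $\mathfrak{D}$-simple and $\partial_{x_1},\ldots,\partial_{x_{n-1}}\in\mathfrak{D}$. Then there exist $d\in\mathfrak{D}$ and elements $f_1,\ldots,f_n\in R$ such that $d(f_n)=1$ and $d(f_i)=0$ for all $i=1,\ldots,n-1$, and such that $R$ is $\{\partial_{x_1},\ldots,\partial_{x_{n-1}},d\}$-simple.
   Context: A $k$-derivation of $R$ is a $k$-linear map satisfying the Leibniz rule. For a family $\mathfrak{D}$ of $k$-derivations, an ideal $I$ is $\mathfrak{D}$-stable if $d(I)\subseteq I$ for all $d\in\mathfrak{D}$, and $R$ is $\mathfrak{D}$-simple if $0$ and $R$ are its only $\mathfrak{D}$-stable ideals. *)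

theory Defs
  imports Main
begin

text \<open>Elements of k[x_1..x_n] and k[[x_1..x_n]] are represented as coefficient
functions on exponent vectors (nat => nat). Variable x_(i+1) has index i,
so x_1..x_n correspond to indices 0..n-1.\<close>

type_synonym 'k ser = "(nat \<Rightarrow> nat) \<Rightarrow> 'k"

definition exps :: "nat \<Rightarrow> (nat \<Rightarrow> nat) set" where
  "exps n = {\<alpha>. \<forall>i\<ge>n. \<alpha> i = 0}"

definition ps_carrier :: "nat \<Rightarrow> ('k::zero) ser set" where
  "ps_carrier n = {f. \<forall>\<alpha>. \<alpha> \<notin> exps n \<longrightarrow> f \<alpha> = 0}"

definition poly_carrier :: "nat \<Rightarrow> ('k::zero) ser set" where
  "poly_carrier n = {f \<in> ps_carrier n. finite {\<alpha>. f \<alpha> \<noteq> 0}}"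

definition s_zero :: "('k::zero) ser" where
  "s_zero = (\<lambda>\<alpha>. 0)"

definition s_add :: "('k::plus) ser \<Rightarrow> 'k ser \<Rightarrow> 'k ser" where
  "s_add f g = (\<lambda>\<alpha>. f \<alpha> + g \<alpha>)"

definition s_smult :: "'k::times \<Rightarrow> 'k ser \<Rightarrow> 'k ser" where
  "s_smult c f = (\<lambda>\<alpha>. c * f \<alpha>)"

definition s_mul :: "('k::comm_semiring_0) ser \<Rightarrow> 'k ser \<Rightarrow> 'k ser" where
  "s_mul f g = (\<lambda>\<alpha>. \<Sum>\<beta>\<in>{\<beta>. \<forall>i. \<beta> i \<le> \<alpha> i}. f \<beta> * g (\<lambda>i. \<alpha> i - \<beta> i))"

definition s_one :: "('k::{zero,one}) ser" where
  "s_one = (\<lambda>\<alpha>. if (\<forall>i. \<alpha> i = 0) then 1 else 0)"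

definition pd :: "nat \<Rightarrow> ('k::semiring_1) ser \<Rightarrow> 'k ser" where
  "pd j f = (\<lambda>\<alpha>. of_nat (\<alpha> j + 1) * f (\<alpha>(j := \<alpha> j + 1)))"

definition is_kderivation :: "('k::comm_semiring_1) ser set \<Rightarrow> ('k ser \<Rightarrow> 'k ser) \<Rightarrow> bool" where
  "is_kderivation R d \<longleftrightarrow>
     (\<forall>f\<in>R. d f \<in> R) \<and>
     (\<forall>f\<in>R. \<forall>g\<in>R. d (s_add f g) = s_add (d f) (d g)) \<and>
     (\<forall>c. \<forall>f\<in>R. d (s_smult c f) = s_smult c (d f)) \<and>
     (\<forall>f\<in>R. \<forall>g\<in>R. d (s_mul f g) = s_add (s_mul f (d g)) (s_mul (d f) g))"

definition is_ideal :: "('k::comm_semiring_1) ser set \<Rightarrow> 'k ser set \<Rightarrow> bool" where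
  "is_ideal R I \<longleftrightarrow> I \<subseteq> R \<and> s_zero \<in> I \<and>
     (\<forall>f\<in>I. \<forall>g\<in>I. s_add f g \<in> I) \<and>
     (\<forall>r\<in>R. \<forall>f\<in>I. s_mul r f \<in> I)"

definition D_stable :: "('k ser \<Rightarrow> 'k ser) set \<Rightarrow> 'k ser set \<Rightarrow> bool" where
  "D_stable D I \<longleftrightarrow> (\<forall>d\<in>D. \<forall>f\<in>I. d f \<in> I)"

definition D_simple :: "('k::comm_semiring_1) ser set \<Rightarrow> ('k ser \<Rightarrow> 'k ser) set \<Rightarrow> bool" where
  "D_simple R D \<longleftrightarrow>
     (\<forall>I. is_ideal R I \<and> D_stable D I \<longrightarrow> I = {s_zero} \<or> I = R)"

definition pairwise_commuting :: "'k ser set \<Rightarrow> ('k ser \<Rightarrow> 'k ser) set \<Rightarrow> bool" where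
  "pairwise_commuting R D \<longleftrightarrow> (\<forall>d1\<in>D. \<forall>d2\<in>D. \<forall>f\<in>R. d1 (d2 f) = d2 (d1 f))"

end

theory Submission
  imports Defs
begin

definition fsupp :: "(nat \<Rightarrow> nat) \<Rightarrow> bool" where
  "fsupp \<alpha> \<longleftrightarrow> finite {i. \<alpha> i \<noteq> 0}"
definition le_set :: "(nat \<Rightarrow> nat) \<Rightarrow> (nat \<Rightarrow> nat) set" where
  "le_set \<alpha> = {\<beta>. \<forall>i. \<beta> i \<le> \<alpha> i}"
definition ei :: "nat \<Rightarrow> nat \<Rightarrow> nat" where "ei k = (\<lambda>j. if j = k then 1 else 0)"

lemma s_mul_le: "s_mul f g \<alpha> = (\<Sum>\<beta>\<in>le_set \<alpha>. f \<beta> * g (\<lambda>i. \<alpha> i - \<beta> i))"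
  by (simp add: s_mul_def le_set_def)

lemma finite_le_set: assumes "fsupp \<alpha>" shows "finite (le_set \<alpha>)"
proof -
  let ?A = "{i. \<alpha> i \<noteq> 0}"
  have fA: "finite ?A" using assms by (simp add: fsupp_def)
  have "le_set \<alpha> \<subseteq> {f. \<forall>x. (x \<in> ?A \<longrightarrow> f x \<in> {0..Max (\<alpha> ` ?A)}) \<and> (x \<notin> ?A \<longrightarrow> f x = 0)}"
  proof
    fix \<beta> assume "\<beta> \<in> le_set \<alpha>"
    hence b: "\<And>i. \<beta> i \<le> \<alpha> i" by (simp add: le_set_def)
    show "\<beta> \<in> {f. \<forall>x. (x \<in> ?A \<longrightarrow> f x \<in> {0..Max (\<alpha> ` ?A)}) \<and> (x \<notin> ?A \<longrightarrow> f x = 0)}"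
    proof (intro CollectI allI conjI impI)
      fix x assume "x \<in> ?A"
      hence "\<alpha> x \<le> Max (\<alpha> ` ?A)" using fA by (intro Max_ge) auto
      thus "\<beta> x \<in> {0..Max (\<alpha> ` ?A)}" using b[of x] by auto
    next
      fix x assume "x \<notin> ?A" thus "\<beta> x = 0" using b[of x] by auto
    qed
  qed
  thus ?thesis by (rule finite_subset) (intro finite_set_of_finite_funs fA, simp)
qed

lemma infinite_le_set: assumes "\<not> fsupp \<alpha>" shows "infinite (le_set \<alpha>)"
proof
  assume f: "finite (le_set \<alpha>)"
  have "ei ` {i. \<alpha> i \<noteq> 0} \<subseteq> le_set \<alpha>" by (auto simp: le_set_def ei_def)
  hence "finite (ei ` {i. \<alpha> i \<noteq> 0})" using f finite_subset by blast
  moreover have "inj ei" by (auto simp: inj_def ei_def fun_eq_iff split: if_splits)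
  ultimately have "finite {i. \<alpha> i \<noteq> 0}" using finite_imageD inj_on_subset by blast
  thus False using assms by (simp add: fsupp_def)
qed

lemma s_mul_nfs: "\<not> fsupp \<alpha> \<Longrightarrow> s_mul f g \<alpha> = 0"
  by (simp add: s_mul_le infinite_le_set)


lemma fsupp_le: assumes "fsupp \<alpha>" "\<beta> \<in> le_set \<alpha>" shows "fsupp \<beta>"
proof -
  have "{i. \<beta> i \<noteq> 0} \<subseteq> {i. \<alpha> i \<noteq> 0}"
  proof
    fix i assume "i \<in> {i. \<beta> i \<noteq> 0}"
    moreover have "\<beta> i \<le> \<alpha> i" using assms(2) by (simp add: le_set_def)
    ultimately show "i \<in> {i. \<alpha> i \<noteq> 0}" by simp
  qed
  thus ?thesis using assms(1) unfolding fsupp_def using finite_subset by blast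
qed

lemma fsupp_diff: "fsupp \<alpha> \<Longrightarrow> fsupp (\<lambda>i. \<alpha> i - \<beta> i)"
  unfolding fsupp_def by (rule finite_subset[of _ "{i. \<alpha> i \<noteq> 0}"]) auto

lemma le_set_diff: "(\<lambda>i. \<alpha> i - \<beta> i) \<in> le_set \<alpha>"
  by (simp add: le_set_def)

lemma diff_diff_le: "\<beta> \<in> le_set \<alpha> \<Longrightarrow> (\<lambda>i. \<alpha> i - (\<alpha> i - \<beta> i)) = \<beta>"
  by (rule ext) (simp add: le_set_def)

lemma s_mul_comm: "s_mul f g = s_mul g (f::('k::comm_semiring_0) ser)"
proof (rule ext)
  fix \<alpha>
  show "s_mul f g \<alpha> = s_mul g f \<alpha>"
    unfolding s_mul_le
    by (rule sum.reindex_bij_witness[where i="\<lambda>\<beta> i. \<alpha> i - \<beta> i" and j="\<lambda>\<beta> i. \<alpha> i - \<beta> i"])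
       (simp_all add: le_set_diff diff_diff_le mult.commute)
qed


lemma s_mul_assoc: "s_mul (s_mul f g) h = s_mul f (s_mul g (h::('k::comm_semiring_0) ser))"
proof (rule ext)
  fix \<alpha>
  show "s_mul (s_mul f g) h \<alpha> = s_mul f (s_mul g h) \<alpha>"
  proof (cases "fsupp \<alpha>")
    case False thus ?thesis by (simp add: s_mul_nfs)
  next
    case True
    have fin: "finite (le_set \<alpha>)" using True by (rule finite_le_set)
    have fin2: "\<And>\<beta>. \<beta> \<in> le_set \<alpha> \<Longrightarrow> finite (le_set \<beta>)"
      using True fsupp_le finite_le_set by blast
    have fin3: "\<And>\<beta>. finite (le_set (\<lambda>i. \<alpha> i - \<beta> i))"
      using True fsupp_diff finite_le_set by blast
    have "s_mul (s_mul f g) h \<alpha> = (\<Sum>\<delta>\<in>le_set \<alpha>. \<Sum>\<beta>\<in>le_set \<delta>. f \<beta> * g (\<lambda>i. \<delta> i - \<beta> i) * h (\<lambda>i. \<alpha> i - \<delta> i))"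
      unfolding s_mul_le by (simp add: sum_distrib_right)
    also have "\<dots> = (\<Sum>(\<delta>,\<beta>)\<in>(SIGMA \<delta>:le_set \<alpha>. le_set \<delta>). f \<beta> * g (\<lambda>i. \<delta> i - \<beta> i) * h (\<lambda>i. \<alpha> i - \<delta> i))"
      by (rule sum.Sigma[OF fin]) (use fin2 in blast)
    also have "\<dots> = (\<Sum>(\<beta>,\<gamma>)\<in>(SIGMA \<beta>:le_set \<alpha>. le_set (\<lambda>i. \<alpha> i - \<beta> i)). f \<beta> * (g \<gamma> * h (\<lambda>i. (\<alpha> i - \<beta> i) - \<gamma> i)))"
      proof (rule sum.reindex_bij_witness[where j="\<lambda>(\<delta>,\<beta>). (\<beta>, \<lambda>i. \<delta> i - \<beta> i)" and i="\<lambda>(\<beta>,\<gamma>). (\<lambda>i. \<beta> i + \<gamma> i, \<beta>)"])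
        fix a assume "a \<in> (SIGMA \<delta>:le_set \<alpha>. le_set \<delta>)"
        then obtain \<delta> \<beta> where a: "a = (\<delta>,\<beta>)" and d: "\<And>i. \<delta> i \<le> \<alpha> i" and b: "\<And>i. \<beta> i \<le> \<delta> i"
          by (auto simp: le_set_def)
        show "(case case a of (\<delta>, \<beta>) \<Rightarrow> (\<beta>, \<lambda>i. \<delta> i - \<beta> i) of (\<beta>, \<gamma>) \<Rightarrow> (\<lambda>i. \<beta> i + \<gamma> i, \<beta>)) = a"
          using b by (simp add: a fun_eq_iff)
        show "(case a of (\<delta>, \<beta>) \<Rightarrow> (\<beta>, \<lambda>i. \<delta> i - \<beta> i)) \<in> (SIGMA \<beta>:le_set \<alpha>. le_set (\<lambda>i. \<alpha> i - \<beta> i))"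
          using b d by (simp add: a le_set_def) (meson diff_le_mono le_trans)
        have e: "(\<lambda>i. \<alpha> i - (\<beta> i + (\<delta> i - \<beta> i))) = (\<lambda>i. \<alpha> i - \<delta> i)"
          using b d by (simp add: fun_eq_iff)
        show "(case case a of (\<delta>, \<beta>) \<Rightarrow> (\<beta>, \<lambda>i. \<delta> i - \<beta> i) of (\<beta>, \<gamma>) \<Rightarrow> f \<beta> * (g \<gamma> * h (\<lambda>i. \<alpha> i - \<beta> i - \<gamma> i))) =
          (case a of (\<delta>, \<beta>) \<Rightarrow> f \<beta> * g (\<lambda>i. \<delta> i - \<beta> i) * h (\<lambda>i. \<alpha> i - \<delta> i))"
          by (simp add: a e mult.assoc)
      next
        fix a assume "a \<in> (SIGMA \<beta>:le_set \<alpha>. le_set (\<lambda>i. \<alpha> i - \<beta> i))"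
        then obtain \<beta> \<gamma> where a: "a = (\<beta>,\<gamma>)" and b: "\<And>i. \<beta> i \<le> \<alpha> i" and c: "\<And>i. \<gamma> i \<le> \<alpha> i - \<beta> i"
          by (auto simp: le_set_def)
        show "(case case a of (\<beta>, \<gamma>) \<Rightarrow> (\<lambda>i. \<beta> i + \<gamma> i, \<beta>) of (\<delta>, \<beta>) \<Rightarrow> (\<beta>, \<lambda>i. \<delta> i - \<beta> i)) = a"
          by (simp add: a)
        show "(case a of (\<beta>, \<gamma>) \<Rightarrow> (\<lambda>i. \<beta> i + \<gamma> i, \<beta>)) \<in> (SIGMA \<delta>:le_set \<alpha>. le_set \<delta>)"
          using b c by (simp add: a le_set_def) (metis le_add_diff_inverse add_le_mono1 add.commute)
      qed
    also have "\<dots> = (\<Sum>\<beta>\<in>le_set \<alpha>. \<Sum>\<gamma>\<in>le_set (\<lambda>i. \<alpha> i - \<beta> i). f \<beta> * (g \<gamma> * h (\<lambda>i. (\<alpha> i - \<beta> i) - \<gamma> i)))"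
      by (rule sum.Sigma[OF fin, symmetric]) (use fin3 in blast)
    also have "\<dots> = s_mul f (s_mul g h) \<alpha>"
      unfolding s_mul_le by (simp add: sum_distrib_left)
    finally show ?thesis .
  qed
qed


lemma s_mul_add_right: "s_mul f (s_add g h) = s_add (s_mul f g) (s_mul f (h::('k::comm_semiring_0) ser))"
  by (simp add: s_mul_def s_add_def distrib_left sum.distrib fun_eq_iff)

lemma s_mul_smult_right: "s_mul f (s_smult c g) = s_smult c (s_mul f (g::('k::comm_semiring_0) ser))"
  by (simp add: s_mul_def s_smult_def sum_distrib_left fun_eq_iff mult.left_commute)

lemma s_mul_zero_right: "s_mul f s_zero = (s_zero::('k::comm_semiring_0) ser)"
  by (simp add: s_mul_def s_zero_def fun_eq_iff)

lemma s_one_mul: assumes "\<forall>\<alpha>. \<not> fsupp \<alpha> \<longrightarrow> f \<alpha> = 0"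
  shows "s_mul s_one f = (f::('k::comm_semiring_1) ser)"
proof (rule ext)
  fix \<alpha> show "s_mul s_one f \<alpha> = f \<alpha>"
  proof (cases "fsupp \<alpha>")
    case False thus ?thesis using assms by (simp add: s_mul_nfs)
  next
    case True
    have z: "(\<lambda>i. 0::nat) \<in> le_set \<alpha>" by (simp add: le_set_def)
    have "s_mul s_one f \<alpha> = (\<Sum>\<beta>\<in>le_set \<alpha>. if \<beta> = (\<lambda>i. 0) then f (\<lambda>i. \<alpha> i - \<beta> i) else 0)"
      unfolding s_mul_le s_one_def by (rule sum.cong) (auto simp: fun_eq_iff)
    also have "\<dots> = f \<alpha>" using finite_le_set[OF True] z by (simp add: sum.delta)
    finally show ?thesis .
  qed
qed

typedef (overloaded) 'k ms = "{f :: ('k::comm_ring_1) ser. \<forall>\<alpha>. \<not> fsupp \<alpha> \<longrightarrow> f \<alpha> = 0}"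
  morphisms rep abs
  by (rule exI[of _ "\<lambda>_. 0"]) auto

lemma rep_nfs: "\<not> fsupp \<alpha> \<Longrightarrow> rep x \<alpha> = 0"
  using rep[of x] by auto

lemma abs_inv: "(\<And>\<alpha>. \<not> fsupp \<alpha> \<Longrightarrow> f \<alpha> = 0) \<Longrightarrow> rep (abs f) = f"
  by (rule abs_inverse) auto

lemma fsupp0: "fsupp (\<lambda>i. 0)" by (simp add: fsupp_def)

instantiation ms :: (comm_ring_1) comm_ring_1
begin
definition zero_ms_def: "0 = abs s_zero"
definition one_ms_def: "1 = abs s_one"
definition plus_ms_def: "x + y = abs (s_add (rep x) (rep y))"
definition uminus_ms_def: "- x = abs (\<lambda>\<alpha>. - rep x \<alpha>)"
definition minus_ms_def: "x - y = abs (\<lambda>\<alpha>. rep x \<alpha> - rep y \<alpha>)"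
definition times_ms_def: "x * y = abs (s_mul (rep x) (rep y))"

lemma rep_zero: "rep 0 = s_zero" unfolding zero_ms_def by (rule abs_inv) (simp add: s_zero_def)
lemma rep_one: "rep 1 = s_one" unfolding one_ms_def
proof (rule abs_inv)
  fix \<alpha> :: "nat \<Rightarrow> nat" assume "\<not> fsupp \<alpha>"
  hence "\<alpha> \<noteq> (\<lambda>i. 0)" using fsupp0 by auto
  thus "s_one \<alpha> = 0" by (auto simp: s_one_def fun_eq_iff)
qed
lemma rep_add: "rep (x + y) = s_add (rep x) (rep y)" unfolding plus_ms_def
  by (rule abs_inv) (simp add: s_add_def rep_nfs)
lemma rep_uminus: "rep (- x) = (\<lambda>\<alpha>. - rep x \<alpha>)" unfolding uminus_ms_def
  by (rule abs_inv) (simp add: rep_nfs)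
lemma rep_minus: "rep (x - y) = (\<lambda>\<alpha>. rep x \<alpha> - rep y \<alpha>)" unfolding minus_ms_def
  by (rule abs_inv) (simp add: rep_nfs)
lemma rep_mult: "rep (x * y) = s_mul (rep x) (rep y)" unfolding times_ms_def
  by (rule abs_inv) (simp add: s_mul_nfs)

instance
proof
  fix a b c :: "'a ms"
  show "a * b * c = a * (b * c)" by (simp add: rep_inject[symmetric] rep_mult s_mul_assoc)
  show "a * b = b * a" by (simp add: rep_inject[symmetric] rep_mult s_mul_comm)
  show "1 * a = a" by (simp add: rep_inject[symmetric] rep_mult rep_one s_one_mul rep_nfs)
  show "(a + b) * c = a * c + b * c"
    by (simp add: rep_inject[symmetric] rep_mult rep_add s_mul_comm[of _ "rep c"] s_mul_add_right)
  show "a + b + c = a + (b + c)" by (simp add: rep_inject[symmetric] rep_add s_add_def add.assoc)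
  show "a + b = b + a" by (simp add: rep_inject[symmetric] rep_add s_add_def add.commute)
  show "0 + a = a" by (simp add: rep_inject[symmetric] rep_add rep_zero s_add_def s_zero_def)
  show "- a + a = 0" by (simp add: rep_inject[symmetric] rep_add rep_zero rep_uminus s_add_def s_zero_def)
  show "a - b = a + - b" by (simp add: rep_inject[symmetric] rep_add rep_minus rep_uminus s_add_def)
  show "(0::'a ms) \<noteq> 1"
  proof
    assume "(0::'a ms) = 1"
    hence "rep (0::'a ms) (\<lambda>i. 0) = rep (1::'a ms) (\<lambda>i. 0)" by simp
    thus False by (simp add: rep_zero rep_one s_zero_def s_one_def)
  qed
qed
end


lemma fsupp_upd: "fsupp (\<alpha>(j := k)) \<longleftrightarrow> fsupp \<alpha>"
proof -
  have "{i. (\<alpha>(j := k)) i \<noteq> 0} - {j} = {i. \<alpha> i \<noteq> 0} - {j}" by auto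
  hence "finite ({i. (\<alpha>(j := k)) i \<noteq> 0} - {j}) \<longleftrightarrow> finite ({i. \<alpha> i \<noteq> 0} - {j})" by simp
  thus ?thesis unfolding fsupp_def by simp
qed

lemma pd_leibniz:
  "pd j (s_mul f g) = s_add (s_mul f (pd j g)) (s_mul (pd j f) (g::('k::comm_semiring_1) ser))"
proof (rule ext)
  fix \<alpha> :: "nat \<Rightarrow> nat"
  let ?a = "\<alpha>(j := \<alpha> j + 1)"
  show "pd j (s_mul f g) \<alpha> = s_add (s_mul f (pd j g)) (s_mul (pd j f) g) \<alpha>"
  proof (cases "fsupp \<alpha>")
    case False thus ?thesis by (simp add: pd_def s_add_def s_mul_nfs fsupp_upd)
  next
    case True
    have fs': "fsupp ?a" using True by (simp add: fsupp_upd)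
    have fL: "finite (le_set \<alpha>)" "finite (le_set ?a)" using True fs' by (simp_all add: finite_le_set)
    have sub: "le_set \<alpha> \<subseteq> le_set ?a" by (auto simp: le_set_def le_Suc_eq)
    have T1: "(\<Sum>\<beta>\<in>le_set ?a. of_nat (\<alpha> j + 1 - \<beta> j) * (f \<beta> * g (\<lambda>i. ?a i - \<beta> i))) = s_mul f (pd j g) \<alpha>"
    proof -
      have "(\<Sum>\<beta>\<in>le_set ?a. of_nat (\<alpha> j + 1 - \<beta> j) * (f \<beta> * g (\<lambda>i. ?a i - \<beta> i)))
          = (\<Sum>\<beta>\<in>le_set \<alpha>. of_nat (\<alpha> j + 1 - \<beta> j) * (f \<beta> * g (\<lambda>i. ?a i - \<beta> i)))"
      proof (rule sum.mono_neutral_right[OF fL(2) sub], rule ballI)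
        fix \<beta> assume "\<beta> \<in> le_set ?a - le_set \<alpha>"
        then obtain k where "\<beta> k > \<alpha> k" "\<forall>i. \<beta> i \<le> ?a i" by (auto simp: le_set_def not_le)
        hence "\<beta> j = \<alpha> j + 1" by (metis fun_upd_apply le_SucE less_le_not_le Suc_eq_plus1)
        thus "of_nat (\<alpha> j + 1 - \<beta> j) * (f \<beta> * g (\<lambda>i. ?a i - \<beta> i)) = 0" by simp
      qed
      also have "\<dots> = s_mul f (pd j g) \<alpha>"
        unfolding s_mul_le pd_def
        apply (rule sum.cong[OF refl])
        subgoal for \<beta>
        proof -
          assume "\<beta> \<in> le_set \<alpha>"
          hence b: "\<And>i. \<beta> i \<le> \<alpha> i" by (simp add: le_set_def)
          have bj: "\<beta> j \<le> \<alpha> j" using b by blast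
          have e1: "(\<lambda>i. ?a i - \<beta> i) = (\<lambda>i. \<alpha> i - \<beta> i)(j := \<alpha> j - \<beta> j + 1)"
            unfolding fun_eq_iff using bj by simp
          have e2: "\<alpha> j + 1 - \<beta> j = \<alpha> j - \<beta> j + 1" using bj by simp
          show ?thesis unfolding e1 e2 by (simp add: mult.left_commute del: fun_upd_apply)
        qed
        done
      finally show ?thesis .
    qed
    have T2: "(\<Sum>\<beta>\<in>le_set ?a. of_nat (\<beta> j) * (f \<beta> * g (\<lambda>i. ?a i - \<beta> i))) = s_mul (pd j f) g \<alpha>"
    proof -
      let ?s = "\<lambda>\<gamma>::nat\<Rightarrow>nat. \<gamma>(j := \<gamma> j + 1)"
      have Ssub: "?s ` le_set \<alpha> \<subseteq> le_set ?a" by (auto simp: le_set_def)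
      have "(\<Sum>\<beta>\<in>le_set ?a. of_nat (\<beta> j) * (f \<beta> * g (\<lambda>i. ?a i - \<beta> i)))
          = (\<Sum>\<beta>\<in>?s ` le_set \<alpha>. of_nat (\<beta> j) * (f \<beta> * g (\<lambda>i. ?a i - \<beta> i)))"
      proof (rule sum.mono_neutral_right[OF fL(2) Ssub], rule ballI)
        fix \<beta> assume b: "\<beta> \<in> le_set ?a - ?s ` le_set \<alpha>"
        show "of_nat (\<beta> j) * (f \<beta> * g (\<lambda>i. ?a i - \<beta> i)) = 0"
        proof (cases "\<beta> j = 0")
          case False
          have bb: "\<forall>i. \<beta> i \<le> ?a i" using b by (simp add: le_set_def)
          have "\<beta>(j := \<beta> j - 1) \<in> le_set \<alpha>" unfolding le_set_def
          proof (intro CollectI allI)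
            fix i show "(\<beta>(j := \<beta> j - 1)) i \<le> \<alpha> i" using bb[rule_format, of i] by (cases "i = j") auto
          qed
          moreover have "\<beta> = ?s (\<beta>(j := \<beta> j - 1))" using False by (auto simp: fun_eq_iff)
          ultimately show ?thesis using b by blast
        qed simp
      qed
      also have "\<dots> = (\<Sum>\<gamma>\<in>le_set \<alpha>. of_nat (?s \<gamma> j) * (f (?s \<gamma>) * g (\<lambda>i. ?a i - ?s \<gamma> i)))"
      proof -
        have inj: "inj_on ?s (le_set \<alpha>)"
        proof (rule inj_onI)
          fix x y :: "nat \<Rightarrow> nat" assume "?s x = ?s y"
          hence h: "\<And>i. ?s x i = ?s y i" by simp
          show "x = y"
          proof (rule ext)
            fix i show "x i = y i" using h[of i] h[of j] by (cases "i = j") auto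
          qed
        qed
        show ?thesis by (rule trans[OF sum.reindex[OF inj]]) (simp only: o_def)
      qed
      also have "\<dots> = s_mul (pd j f) g \<alpha>"
        unfolding s_mul_le pd_def
        apply (rule sum.cong[OF refl])
        subgoal for \<gamma>
        proof -
          assume "\<gamma> \<in> le_set \<alpha>"
          hence b: "\<And>i. \<gamma> i \<le> \<alpha> i" by (simp add: le_set_def)
          have e1: "(\<lambda>i. ?a i - ?s \<gamma> i) = (\<lambda>i. \<alpha> i - \<gamma> i)" by (simp add: fun_eq_iff)
          have e2: "(?s \<gamma>) j = \<gamma> j + 1" by simp
          show ?thesis unfolding e1 e2 by (simp add: mult.assoc del: fun_upd_apply)
        qed
        done
      finally show ?thesis .
    qed
    have "pd j (s_mul f g) \<alpha> = (\<Sum>\<beta>\<in>le_set ?a. of_nat (\<alpha> j + 1) * (f \<beta> * g (\<lambda>i. ?a i - \<beta> i)))"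
      unfolding pd_def s_mul_le by (simp add: sum_distrib_left)
    also have "\<dots> = (\<Sum>\<beta>\<in>le_set ?a. of_nat (\<alpha> j + 1 - \<beta> j) * (f \<beta> * g (\<lambda>i. ?a i - \<beta> i))
                     + of_nat (\<beta> j) * (f \<beta> * g (\<lambda>i. ?a i - \<beta> i)))"
    proof (rule sum.cong[OF refl])
      fix \<beta> assume "\<beta> \<in> le_set ?a"
      hence "\<beta> j \<le> \<alpha> j + 1" by (auto simp: le_set_def dest: spec[of _ j])
      hence "of_nat (\<alpha> j + 1) = (of_nat (\<alpha> j + 1 - \<beta> j) + of_nat (\<beta> j) :: 'k)"
        by (simp only: of_nat_add[symmetric]) simp
      thus "of_nat (\<alpha> j + 1) * (f \<beta> * g (\<lambda>i. ?a i - \<beta> i)) = of_nat (\<alpha> j + 1 - \<beta> j) * (f \<beta> * g (\<lambda>i. ?a i - \<beta> i))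
                     + of_nat (\<beta> j) * (f \<beta> * g (\<lambda>i. ?a i - \<beta> i))" by (simp add: distrib_right)
    qed
    also have "\<dots> = s_add (s_mul f (pd j g)) (s_mul (pd j f) g) \<alpha>"
      by (simp only: sum.distrib T1 T2 s_add_def)
    finally show ?thesis .
  qed
qed


section \<open>Carrier closure\<close>

lemma exps_fsupp: "\<alpha> \<in> exps n \<Longrightarrow> fsupp \<alpha>"
  unfolding exps_def fsupp_def
  by (rule finite_subset[of _ "{..<n}"]) (auto simp: not_less[symmetric])

lemma ps_mul: "f \<in> ps_carrier n \<Longrightarrow> g \<in> ps_carrier n \<Longrightarrow> s_mul f g \<in> ps_carrier n"
proof -
  assume f: "f \<in> ps_carrier n" and g: "g \<in> ps_carrier n"
  show ?thesis unfolding ps_carrier_def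
  proof (intro CollectI allI impI)
    fix \<alpha> assume "\<alpha> \<notin> exps n"
    then obtain k where k: "k \<ge> n" "\<alpha> k \<noteq> 0" by (auto simp: exps_def)
    show "s_mul f g \<alpha> = 0" unfolding s_mul_le
    proof (rule sum.neutral, rule ballI)
      fix \<beta> assume "\<beta> \<in> le_set \<alpha>"
      show "f \<beta> * g (\<lambda>i. \<alpha> i - \<beta> i) = 0"
      proof (cases "\<beta> k = 0")
        case True
        hence "(\<lambda>i. \<alpha> i - \<beta> i) \<notin> exps n" using k by (auto simp: exps_def)
        thus ?thesis using g by (simp add: ps_carrier_def)
      next
        case False
        hence "\<beta> \<notin> exps n" using k by (auto simp: exps_def)
        thus ?thesis using f by (simp add: ps_carrier_def)
      qed
    qed
  qed
qed

lemma poly_mul: "f \<in> poly_carrier n \<Longrightarrow> g \<in> poly_carrier n \<Longrightarrow> s_mul f g \<in> poly_carrier n"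
proof -
  assume f: "f \<in> poly_carrier n" and g: "g \<in> poly_carrier n"
  have "{\<alpha>. s_mul f g \<alpha> \<noteq> 0} \<subseteq> (\<lambda>(\<beta>,\<gamma>). \<lambda>i. \<beta> i + \<gamma> i) ` ({\<beta>. f \<beta> \<noteq> 0} \<times> {\<gamma>. g \<gamma> \<noteq> 0})"
  proof
    fix \<alpha> assume "\<alpha> \<in> {\<alpha>. s_mul f g \<alpha> \<noteq> 0}"
    hence "(\<Sum>\<beta>\<in>le_set \<alpha>. f \<beta> * g (\<lambda>i. \<alpha> i - \<beta> i)) \<noteq> 0" by (simp add: s_mul_le)
    then obtain \<beta> where b: "\<beta> \<in> le_set \<alpha>" "f \<beta> * g (\<lambda>i. \<alpha> i - \<beta> i) \<noteq> 0"
      by (meson sum.not_neutral_contains_not_neutral)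
    have "\<alpha> = (\<lambda>i. \<beta> i + (\<alpha> i - \<beta> i))" using b(1) by (auto simp: le_set_def fun_eq_iff)
    thus "\<alpha> \<in> (\<lambda>(\<beta>,\<gamma>). \<lambda>i. \<beta> i + \<gamma> i) ` ({\<beta>. f \<beta> \<noteq> 0} \<times> {\<gamma>. g \<gamma> \<noteq> 0})"
      using b(2) by (intro image_eqI[of _ _ "(\<beta>, \<lambda>i. \<alpha> i - \<beta> i)"]) auto
  qed
  moreover have "finite ({\<beta>. f \<beta> \<noteq> 0} \<times> {\<gamma>. g \<gamma> \<noteq> 0})" using f g by (simp add: poly_carrier_def)
  ultimately have "finite {\<alpha>. s_mul f g \<alpha> \<noteq> 0}" using finite_subset by blast
  thus ?thesis using f g ps_mul[of f n g] by (auto simp: poly_carrier_def)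
qed

lemma ps_pd: "f \<in> ps_carrier n \<Longrightarrow> pd i f \<in> ps_carrier n"
  unfolding ps_carrier_def pd_def exps_def
proof (intro CollectI allI impI)
  fix \<alpha> :: "nat \<Rightarrow> nat" assume f: "f \<in> {f. \<forall>\<alpha>. \<alpha> \<notin> {\<alpha>. \<forall>i\<ge>n. \<alpha> i = 0} \<longrightarrow> f \<alpha> = 0}"
    and a: "\<alpha> \<notin> {\<alpha>. \<forall>i\<ge>n. \<alpha> i = 0}"
  have "\<alpha>(i := \<alpha> i + 1) \<notin> {\<alpha>. \<forall>i\<ge>n. \<alpha> i = 0}" using a by (auto split: if_splits)
  thus "of_nat (\<alpha> i + 1) * f (\<alpha>(i := \<alpha> i + 1)) = 0" using f by simp
qed

lemma poly_pd: "f \<in> poly_carrier n \<Longrightarrow> pd i f \<in> poly_carrier n"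
proof -
  assume f: "f \<in> poly_carrier n"
  have "{\<alpha>. pd i f \<alpha> \<noteq> 0} \<subseteq> (\<lambda>\<beta>. \<beta>(i := \<beta> i - 1)) ` {\<beta>. f \<beta> \<noteq> 0}"
  proof
    fix \<alpha> assume "\<alpha> \<in> {\<alpha>. pd i f \<alpha> \<noteq> 0}"
    hence "f (\<alpha>(i := \<alpha> i + 1)) \<noteq> 0" by (auto simp: pd_def)
    thus "\<alpha> \<in> (\<lambda>\<beta>. \<beta>(i := \<beta> i - 1)) ` {\<beta>. f \<beta> \<noteq> 0}"
      by (intro image_eqI[of _ _ "\<alpha>(i := \<alpha> i + 1)"]) auto
  qed
  hence "finite {\<alpha>. pd i f \<alpha> \<noteq> 0}" using f finite_subset by (auto simp: poly_carrier_def)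
  thus ?thesis using f ps_pd[of f n i] by (auto simp: poly_carrier_def)
qed


definition goodR :: "nat \<Rightarrow> ('k::comm_ring_1) ser set \<Rightarrow> bool" where
  "goodR n R \<longleftrightarrow> R = poly_carrier n \<or> R = ps_carrier n"

lemma R_ps: "goodR n R \<Longrightarrow> f \<in> R \<Longrightarrow> f \<in> ps_carrier n"
  by (auto simp: goodR_def poly_carrier_def)

lemma R_exps: "goodR n R \<Longrightarrow> f \<in> R \<Longrightarrow> \<alpha> \<notin> exps n \<Longrightarrow> f \<alpha> = 0"
  using R_ps by (fastforce simp: ps_carrier_def)

lemma R_nfs: "goodR n R \<Longrightarrow> f \<in> R \<Longrightarrow> \<not> fsupp \<alpha> \<Longrightarrow> f \<alpha> = 0"
  using R_exps exps_fsupp by blast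

lemma R_intro:
  assumes "goodR n R" "\<And>\<alpha>. \<alpha> \<notin> exps n \<Longrightarrow> f \<alpha> = 0"
    "R = poly_carrier n \<Longrightarrow> finite {\<alpha>. f \<alpha> \<noteq> 0}"
  shows "f \<in> R"
  using assms by (auto simp: goodR_def poly_carrier_def ps_carrier_def)

lemma R_fin: "goodR n R \<Longrightarrow> R = poly_carrier n \<Longrightarrow> f \<in> R \<Longrightarrow> finite {\<alpha>. f \<alpha> \<noteq> 0}"
  by (simp add: poly_carrier_def)

lemma R_mul: "goodR n R \<Longrightarrow> f \<in> R \<Longrightarrow> g \<in> R \<Longrightarrow> s_mul f g \<in> R"
  using poly_mul ps_mul by (auto simp: goodR_def)

lemma R_pd: "goodR n R \<Longrightarrow> f \<in> R \<Longrightarrow> pd i f \<in> R"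
  using poly_pd ps_pd by (auto simp: goodR_def)

lemma R_add: assumes "goodR n R" "f \<in> R" "g \<in> R" shows "s_add f g \<in> R"
proof (rule R_intro[OF assms(1)])
  fix \<alpha> assume "\<alpha> \<notin> exps n" thus "s_add f g \<alpha> = 0" using R_exps[OF assms(1,2)] R_exps[OF assms(1,3)] by (simp add: s_add_def)
next
  assume "R = poly_carrier n"
  hence "finite ({\<alpha>. f \<alpha> \<noteq> 0} \<union> {\<alpha>. g \<alpha> \<noteq> 0})" using assms R_fin by blast
  thus "finite {\<alpha>. s_add f g \<alpha> \<noteq> 0}" by (rule finite_subset[rotated]) (auto simp: s_add_def)
qed

lemma R_smult: assumes "goodR n R" "f \<in> R" shows "s_smult c f \<in> R"
proof (rule R_intro[OF assms(1)])
  fix \<alpha> assume "\<alpha> \<notin> exps n" thus "s_smult c f \<alpha> = 0" using R_exps[OF assms(1,2)] by (simp add: s_smult_def)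
next
  assume "R = poly_carrier n"
  hence "finite {\<alpha>. f \<alpha> \<noteq> 0}" using assms R_fin by blast
  thus "finite {\<alpha>. s_smult c f \<alpha> \<noteq> 0}" by (rule finite_subset[rotated]) (auto simp: s_smult_def)
qed

lemma R_neg: assumes "goodR n R" "f \<in> R" shows "(\<lambda>\<alpha>. - f \<alpha>) \<in> R"
proof (rule R_intro[OF assms(1)])
  fix \<alpha> assume "\<alpha> \<notin> exps n" thus "- f \<alpha> = 0" using R_exps[OF assms(1,2)] by simp
next
  assume "R = poly_carrier n"
  hence "finite {\<alpha>. f \<alpha> \<noteq> 0}" using assms R_fin by blast
  thus "finite {\<alpha>. - f \<alpha> \<noteq> 0}" by simp
qed

lemma R_zero: "goodR n R \<Longrightarrow> (s_zero::('k::comm_ring_1) ser) \<in> R"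
  by (rule R_intro) (auto simp: s_zero_def)

lemma zero_exps: "(\<lambda>i. 0) \<in> exps n" by (simp add: exps_def)

lemma R_one: "goodR n R \<Longrightarrow> (s_one::('k::comm_ring_1) ser) \<in> R"
proof (rule R_intro)
  fix \<alpha> :: "nat \<Rightarrow> nat" assume "\<alpha> \<notin> exps n"
  hence "\<alpha> \<noteq> (\<lambda>i. 0)" using zero_exps by auto
  thus "(s_one::'k ser) \<alpha> = 0" by (auto simp: s_one_def fun_eq_iff)
next
  have "{\<alpha>. (s_one::'k ser) \<alpha> \<noteq> 0} \<subseteq> {\<lambda>i. 0}" by (auto simp: s_one_def fun_eq_iff)
  thus "finite {\<alpha>. (s_one::'k ser) \<alpha> \<noteq> 0}" by (rule finite_subset) simp
qed

definition xser :: "nat \<Rightarrow> ('k::{zero,one}) ser" where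
  "xser i = (\<lambda>\<alpha>. if \<alpha> = ei i then 1 else 0)"

lemma R_x: "goodR n R \<Longrightarrow> i < n \<Longrightarrow> (xser i :: ('k::comm_ring_1) ser) \<in> R"
proof (rule R_intro)
  fix \<alpha> :: "nat \<Rightarrow> nat" assume "i < n" "\<alpha> \<notin> exps n"
  hence "\<alpha> \<noteq> ei i" by (auto simp: exps_def ei_def)
  thus "(xser i :: 'k ser) \<alpha> = 0" by (simp add: xser_def)
next
  have "{\<alpha>. (xser i::'k ser) \<alpha> \<noteq> 0} \<subseteq> {ei i}" by (auto simp: xser_def)
  thus "finite {\<alpha>. (xser i::'k ser) \<alpha> \<noteq> 0}" by (rule finite_subset) simp
qed


section \<open>Ring-level operations\<close>

definition sc :: "'k \<Rightarrow> ('k::comm_ring_1) ms" where "sc c = abs (s_smult c s_one)"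
definition Xv :: "nat \<Rightarrow> ('k::comm_ring_1) ms" where "Xv i = abs (xser i)"
definition P :: "nat \<Rightarrow> ('k::comm_ring_1) ms \<Rightarrow> 'k ms" where "P i x = abs (pd i (rep x))"
definition Ed :: "('k ser \<Rightarrow> 'k ser) \<Rightarrow> ('k::comm_ring_1) ms \<Rightarrow> 'k ms" where "Ed e x = abs (e (rep x))"
definition inR :: "('k::comm_ring_1) ser set \<Rightarrow> 'k ms \<Rightarrow> bool" where "inR R x \<longleftrightarrow> rep x \<in> R"

lemma s_one_nfs: "\<not> fsupp \<alpha> \<Longrightarrow> s_one \<alpha> = 0"
proof -
  assume "\<not> fsupp \<alpha>"
  hence "\<alpha> \<noteq> (\<lambda>i. 0)" using fsupp0 by auto
  thus "s_one \<alpha> = 0" by (auto simp: s_one_def fun_eq_iff)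
qed

lemma rep_sc: "rep (sc c) = s_smult c s_one"
  unfolding sc_def by (rule abs_inv) (simp add: s_smult_def s_one_nfs)

lemma rep_sc_mult: "rep (sc c * x) = s_smult c (rep x)"
  by (simp add: rep_mult rep_sc s_mul_comm[of "s_smult c s_one"] s_mul_smult_right, subst s_mul_comm,
      simp add: s_one_mul rep_nfs)

lemma rep_Xv: "rep (Xv i) = xser i"
  unfolding Xv_def
proof (rule abs_inv)
  fix \<alpha> :: "nat \<Rightarrow> nat" assume "\<not> fsupp \<alpha>"
  moreover have "fsupp (ei i)" unfolding fsupp_def ei_def by (rule finite_subset[of _ "{i}"]) auto
  ultimately show "xser i \<alpha> = 0" by (auto simp: xser_def)
qed

lemma rep_P: "rep (P i x) = pd i (rep x)"
  unfolding P_def by (rule abs_inv) (simp add: pd_def rep_nfs fsupp_upd)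

lemma P_mult: "P i (x * y) = x * P i y + P i x * y"
  by (simp add: rep_inject[symmetric] rep_P rep_mult rep_add pd_leibniz)

lemma P_add: "P i (x + y) = P i x + P i y"
  by (simp add: rep_inject[symmetric] rep_P rep_add pd_def s_add_def distrib_left fun_eq_iff)

lemma P_uminus: "P i (- x) = - P i x"
  by (simp add: rep_inject[symmetric] rep_P rep_uminus pd_def fun_eq_iff)

lemma P_minus: "P i (x - y) = P i x - P i y"
  by (simp add: rep_inject[symmetric] rep_P rep_minus pd_def fun_eq_iff right_diff_distrib)

lemma P_zero: "P i 0 = 0"
  by (simp add: rep_inject[symmetric] rep_P rep_zero pd_def fun_eq_iff s_zero_def)

lemma s_one_upd: "s_one (\<alpha>(i := Suc x)) = 0"
proof -
  have "\<not> (\<forall>k. (\<alpha>(i := Suc x)) k = 0)" by (metis fun_upd_same nat.distinct(1))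
  thus ?thesis unfolding s_one_def by (rule if_not_P)
qed

lemma P_sc: "P i (sc c) = 0"
  by (simp add: rep_inject[symmetric] rep_P rep_zero rep_sc pd_def fun_eq_iff s_zero_def s_smult_def s_one_upd)

lemma P_one: "P i 1 = 0"
  by (simp add: rep_inject[symmetric] rep_P rep_zero rep_one pd_def fun_eq_iff s_zero_def s_one_upd)

lemma P_sum: "P i (sum F A) = (\<Sum>a\<in>A. P i (F a))"
  by (induction A rule: infinite_finite_induct) (simp_all add: P_zero P_add)

lemma P_Xv: "P i (Xv j) = (if i = j then 1 else 0)"
proof (cases "i = j")
  case True
  have "\<And>\<alpha>. (\<alpha>(j := Suc (\<alpha> j)) = ei j) = (\<alpha> = (\<lambda>i. 0))"
    by (auto simp: ei_def fun_eq_iff split: if_splits)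
  thus ?thesis using True by (simp add: rep_inject[symmetric] rep_P rep_one rep_Xv pd_def xser_def s_one_def fun_eq_iff)
next
  case False
  have "\<And>\<alpha>. \<alpha>(i := Suc (\<alpha> i)) \<noteq> ei j" using False by (auto simp: ei_def fun_eq_iff dest: spec[of _ i])
  hence "pd i (xser j) = (s_zero :: 'a ser)" by (intro ext) (simp add: pd_def xser_def s_zero_def)
  thus ?thesis using False by (simp add: rep_inject[symmetric] rep_P rep_zero rep_Xv)
qed

lemma rep_sum: "rep (sum F A) = (\<lambda>\<alpha>. \<Sum>a\<in>A. rep (F a) \<alpha>)"
  by (induction A rule: infinite_finite_induct) (simp_all add: rep_zero rep_add s_zero_def s_add_def)

lemma rep_Xv_mult: "rep (Xv j * y) \<gamma> = (if \<gamma> j \<ge> 1 then rep y (\<gamma>(j := \<gamma> j - 1)) else 0)"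
proof (cases "fsupp \<gamma>")
  case False thus ?thesis by (simp add: rep_nfs fsupp_upd)
next
  case True
  have "rep (Xv j * y) \<gamma> = (\<Sum>\<beta>\<in>le_set \<gamma>. if \<beta> = ei j then rep y (\<lambda>i. \<gamma> i - \<beta> i) else 0)"
    unfolding rep_mult rep_Xv s_mul_le xser_def by (rule sum.cong) auto
  also have "\<dots> = (if ei j \<in> le_set \<gamma> then rep y (\<lambda>i. \<gamma> i - ei j i) else 0)"
    using finite_le_set[OF True] by (simp add: sum.delta)
  also have "\<dots> = (if \<gamma> j \<ge> 1 then rep y (\<gamma>(j := \<gamma> j - 1)) else 0)"
  proof -
    have "ei j \<in> le_set \<gamma> \<longleftrightarrow> \<gamma> j \<ge> 1" by (auto simp: le_set_def ei_def dest: spec[of _ j])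
    moreover have "(\<lambda>i. \<gamma> i - ei j i) = \<gamma>(j := \<gamma> j - 1)" by (auto simp: ei_def fun_eq_iff)
    ultimately show ?thesis by simp
  qed
  finally show ?thesis .
qed


lemma abs_R: "goodR n R \<Longrightarrow> f \<in> R \<Longrightarrow> rep (abs f) = f"
  using R_nfs[of n R f] by (intro abs_inv) blast

lemma inR_abs: "goodR n R \<Longrightarrow> f \<in> R \<Longrightarrow> inR R (abs f)"
  by (simp add: inR_def abs_R)

context
  fixes n :: nat and R :: "('k::comm_ring_1) ser set"
  assumes gR: "goodR n R"
begin

lemma inR_zero: "inR R 0" by (simp add: inR_def rep_zero R_zero[OF gR])
lemma inR_one: "inR R 1" by (simp add: inR_def rep_one R_one[OF gR])
lemma inR_add: "inR R x \<Longrightarrow> inR R y \<Longrightarrow> inR R (x + y)" by (simp add: inR_def rep_add R_add[OF gR])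
lemma inR_mult: "inR R x \<Longrightarrow> inR R y \<Longrightarrow> inR R (x * y)" by (simp add: inR_def rep_mult R_mul[OF gR])
lemma inR_uminus: "inR R x \<Longrightarrow> inR R (- x)" by (simp add: inR_def rep_uminus R_neg[OF gR])
lemma inR_minus: "inR R x \<Longrightarrow> inR R y \<Longrightarrow> inR R (x - y)"
  by (simp only: diff_conv_add_uminus inR_add inR_uminus)
lemma inR_sum: "(\<And>a. a \<in> A \<Longrightarrow> inR R (F a)) \<Longrightarrow> inR R (sum F A)"
  by (induction A rule: infinite_finite_induct) (simp_all add: inR_zero inR_add)
lemma inR_sc: "inR R (sc c)" by (simp add: inR_def rep_sc R_smult[OF gR R_one[OF gR]])
lemma inR_Xv: "i < n \<Longrightarrow> inR R (Xv i)" by (simp add: inR_def rep_Xv R_x[OF gR])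
lemma inR_P: "inR R x \<Longrightarrow> inR R (P i x)" by (simp add: inR_def rep_P R_pd[OF gR])

context
  fixes e :: "'k ser \<Rightarrow> 'k ser"
  assumes de: "is_kderivation R e"
begin

lemma de_R: "f \<in> R \<Longrightarrow> e f \<in> R" using de by (simp add: is_kderivation_def)
lemma de_add: "f \<in> R \<Longrightarrow> g \<in> R \<Longrightarrow> e (s_add f g) = s_add (e f) (e g)" using de by (simp add: is_kderivation_def)
lemma de_smult: "f \<in> R \<Longrightarrow> e (s_smult c f) = s_smult c (e f)" using de by (simp add: is_kderivation_def)
lemma de_mul: "f \<in> R \<Longrightarrow> g \<in> R \<Longrightarrow> e (s_mul f g) = s_add (s_mul f (e g)) (s_mul (e f) g)"
  using de by (simp add: is_kderivation_def)

lemma rep_Ed: "inR R x \<Longrightarrow> rep (Ed e x) = e (rep x)"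
  unfolding Ed_def inR_def by (intro abs_R[OF gR] de_R)

lemma inR_Ed: "inR R x \<Longrightarrow> inR R (Ed e x)"
  using rep_Ed de_R by (simp add: inR_def)

lemma Ed_add: assumes "inR R x" "inR R y" shows "Ed e (x + y) = Ed e x + Ed e y"
proof -
  have "rep (Ed e (x + y)) = e (s_add (rep x) (rep y))" using assms by (simp add: rep_Ed inR_add rep_add)
  also have "\<dots> = s_add (e (rep x)) (e (rep y))" using assms by (simp add: de_add inR_def)
  also have "\<dots> = rep (Ed e x + Ed e y)" using assms by (simp add: rep_add rep_Ed)
  finally show ?thesis by (simp add: rep_inject)
qed

lemma Ed_mult: assumes "inR R x" "inR R y" shows "Ed e (x * y) = x * Ed e y + Ed e x * y"
proof -
  have "rep (Ed e (x * y)) = e (s_mul (rep x) (rep y))" using assms by (simp add: rep_Ed inR_mult rep_mult)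
  also have "\<dots> = s_add (s_mul (rep x) (e (rep y))) (s_mul (e (rep x)) (rep y))" using assms by (simp add: de_mul inR_def)
  also have "\<dots> = rep (x * Ed e y + Ed e x * y)" using assms by (simp add: rep_add rep_mult rep_Ed)
  finally show ?thesis by (simp add: rep_inject)
qed

lemma Ed_zero: "Ed e 0 = 0"
proof -
  have "Ed e (0 + 0) = Ed e 0 + Ed e 0" by (rule Ed_add) (simp_all add: inR_zero)
  thus ?thesis by simp
qed

lemma Ed_one: "Ed e 1 = 0"
proof -
  have "Ed e (1 * 1) = 1 * Ed e 1 + Ed e 1 * 1" by (rule Ed_mult) (simp_all add: inR_one)
  thus ?thesis by simp
qed

lemma Ed_sc: "Ed e (sc c) = 0"
proof -
  have "rep (Ed e (sc c)) = e (s_smult c (rep 1))" by (simp add: rep_Ed inR_sc rep_sc rep_one)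
  also have "\<dots> = s_smult c (rep (Ed e 1))" using inR_one by (simp add: de_smult inR_def rep_Ed)
  finally have "rep (Ed e (sc c)) = s_smult c (rep (Ed e 1))" .
  thus ?thesis by (simp add: Ed_one rep_zero s_smult_def s_zero_def rep_inject[symmetric])
qed

lemma Ed_uminus: "inR R x \<Longrightarrow> Ed e (- x) = - Ed e x"
proof -
  assume x: "inR R x"
  have "Ed e (x + - x) = Ed e x + Ed e (- x)" by (rule Ed_add) (simp_all add: x inR_uminus)
  thus ?thesis by (simp add: Ed_zero eq_neg_iff_add_eq_0 add.commute)
qed

lemma Ed_minus: "inR R x \<Longrightarrow> inR R y \<Longrightarrow> Ed e (x - y) = Ed e x - Ed e y"
proof -
  assume x: "inR R x" and y: "inR R y"
  have "Ed e (x + - y) = Ed e x + Ed e (- y)" by (rule Ed_add[OF x inR_uminus[OF y]])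
  thus ?thesis by (simp add: Ed_uminus[OF y])
qed

lemma Ed_sum: "(\<And>a. a \<in> A \<Longrightarrow> inR R (F a)) \<Longrightarrow> Ed e (sum F A) = (\<Sum>a\<in>A. Ed e (F a))"
proof (induction A rule: infinite_finite_induct)
  case (insert a A)
  have h1: "inR R (F a)" "inR R (sum F A)" using insert.prems by (auto intro: inR_sum)
  have h2: "Ed e (sum F A) = (\<Sum>a\<in>A. Ed e (F a))" using insert.IH insert.prems by blast
  show ?case using insert.hyps by (simp add: Ed_add[OF h1] h2)
qed (simp_all add: Ed_zero)

end

definition Gd :: "nat \<Rightarrow> 'k ms \<Rightarrow> ('k::comm_ring_1) ms" where
  "Gd j x = abs (\<lambda>\<alpha>. if (\<forall>k<j. \<alpha> k = 0) then rep x (\<alpha>(j := \<alpha> j + 1)) else 0)"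

lemma Gd_R: assumes x: "inR R x" shows "(\<lambda>\<alpha>. if (\<forall>k<j. \<alpha> k = 0) then rep x (\<alpha>(j := \<alpha> j + 1)) else 0) \<in> R"
proof (rule R_intro[OF gR])
  fix \<alpha> :: "nat \<Rightarrow> nat" assume "\<alpha> \<notin> exps n"
  hence "\<alpha>(j := \<alpha> j + 1) \<notin> exps n" by (auto simp: exps_def split: if_splits)
  thus "(if (\<forall>k<j. \<alpha> k = 0) then rep x (\<alpha>(j := \<alpha> j + 1)) else 0) = 0"
    using R_exps[OF gR] x by (simp add: inR_def)
next
  assume "R = poly_carrier n"
  hence fin: "finite {\<alpha>. rep x \<alpha> \<noteq> 0}" using x R_fin[OF gR] by (simp add: inR_def)
  have "{\<alpha>. (if (\<forall>k<j. \<alpha> k = 0) then rep x (\<alpha>(j := \<alpha> j + 1)) else 0) \<noteq> 0}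
        \<subseteq> (\<lambda>\<beta>. \<beta>(j := \<beta> j - 1)) ` {\<alpha>. rep x \<alpha> \<noteq> 0}"
  proof
    fix \<alpha> assume "\<alpha> \<in> {\<alpha>. (if (\<forall>k<j. \<alpha> k = 0) then rep x (\<alpha>(j := \<alpha> j + 1)) else 0) \<noteq> 0}"
    hence "rep x (\<alpha>(j := \<alpha> j + 1)) \<noteq> 0" by (auto split: if_splits)
    thus "\<alpha> \<in> (\<lambda>\<beta>. \<beta>(j := \<beta> j - 1)) ` {\<alpha>. rep x \<alpha> \<noteq> 0}"
      by (intro image_eqI[of _ _ "\<alpha>(j := \<alpha> j + 1)"]) auto
  qed
  thus "finite {\<alpha>. (if (\<forall>k<j. \<alpha> k = 0) then rep x (\<alpha>(j := \<alpha> j + 1)) else 0) \<noteq> 0}"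
    using fin finite_subset by blast
qed

lemma inR_Gd: "inR R x \<Longrightarrow> inR R (Gd j x)"
  unfolding Gd_def by (rule inR_abs[OF gR Gd_R])

lemma rep_Gd: "inR R x \<Longrightarrow> rep (Gd j x) = (\<lambda>\<alpha>. if (\<forall>k<j. \<alpha> k = 0) then rep x (\<alpha>(j := \<alpha> j + 1)) else 0)"
  unfolding Gd_def by (rule abs_R[OF gR Gd_R])

lemma decomp: assumes x: "inR R x"
  shows "x = sc (rep x (\<lambda>i. 0)) + (\<Sum>j<n. Xv j * Gd j x)"
proof -
  have "rep x \<gamma> = rep (sc (rep x (\<lambda>i. 0)) + (\<Sum>j<n. Xv j * Gd j x)) \<gamma>" for \<gamma>
  proof -
    let ?C = "\<lambda>j. \<gamma> j \<ge> 1 \<and> (\<forall>k<j. \<gamma> k = 0)"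
    have t: "rep (Xv j * Gd j x) \<gamma> = (if ?C j then rep x \<gamma> else 0)" for j
    proof -
      have "(\<gamma>(j := \<gamma> j - 1))(j := (\<gamma>(j := \<gamma> j - 1)) j + 1) = \<gamma>" if "\<gamma> j \<ge> 1"
        using that by (auto simp: fun_eq_iff)
      thus ?thesis by (auto simp: rep_Xv_mult rep_Gd[OF x])
    qed
    have rhs: "rep (sc (rep x (\<lambda>i. 0)) + (\<Sum>j<n. Xv j * Gd j x)) \<gamma>
          = rep x (\<lambda>i. 0) * s_one \<gamma> + (\<Sum>j<n. if ?C j then rep x \<gamma> else 0)"
      by (simp add: rep_add rep_sum rep_sc s_add_def s_smult_def t)
    show ?thesis
    proof (cases "\<gamma> \<in> exps n")
      case False
      hence "rep x \<gamma> = 0" using x R_exps[OF gR] by (simp add: inR_def)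
      moreover have "\<gamma> \<noteq> (\<lambda>i. 0)" using False zero_exps by auto
      ultimately have "(s_one::'k ser) \<gamma> = 0" "(\<Sum>j<n. if ?C j then rep x \<gamma> else 0) = 0"
        by (auto simp: s_one_def fun_eq_iff intro!: sum.neutral)
      thus ?thesis unfolding rhs using \<open>rep x \<gamma> = 0\<close> by simp
    next
      case True
      show ?thesis
      proof (cases "\<gamma> = (\<lambda>i. 0)")
        case True thus ?thesis unfolding rhs by (simp add: s_one_def)
      next
        case False
        then obtain i0 where i0: "\<gamma> i0 \<noteq> 0" by auto
        define j0 where "j0 = (LEAST j. \<gamma> j \<noteq> 0)"
        have j0: "\<gamma> j0 \<noteq> 0" unfolding j0_def using i0 by (rule LeastI)
        have j0n: "j0 < n" using j0 True by (auto simp: exps_def not_less[symmetric])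
        have Cj: "?C j \<longleftrightarrow> j = j0" for j
        proof
          assume "?C j"
          thus "j = j0" unfolding j0_def by (intro Least_equality[symmetric]) (auto simp: not_less[symmetric])
        next
          assume "j = j0"
          thus "?C j" using j0 by (auto simp: j0_def dest: not_less_Least)
        qed
        have "(\<Sum>j<n. if ?C j then rep x \<gamma> else 0) = (\<Sum>j<n. if j = j0 then rep x \<gamma> else 0)"
          by (intro sum.cong refl) (simp only: Cj)
        also have "\<dots> = rep x \<gamma>" using j0n by (simp add: sum.delta)
        finally have "(\<Sum>j<n. if ?C j then rep x \<gamma> else 0) = rep x \<gamma>" .
        moreover have "(s_one::'k ser) \<gamma> = 0" using False by (auto simp: s_one_def fun_eq_iff)
        ultimately show ?thesis unfolding rhs by simp
      qed
    qed
  qed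
  hence "rep x = rep (sc (rep x (\<lambda>i. 0)) + (\<Sum>j<n. Xv j * Gd j x))" by (rule ext)
  thus ?thesis by (simp only: rep_inject)
qed


lemma sum_delta_mult: "i < n \<Longrightarrow> (\<Sum>j<n. (if i = j then 1 else 0) * G j) = (G i :: 'a::comm_ring_1)"
proof -
  assume "i < n"
  have "(\<Sum>j<n. (if i = j then 1 else 0) * G j) = (\<Sum>j<n. if i = j then G j else 0)"
    by (rule sum.cong) auto
  also have "\<dots> = G i" using \<open>i < n\<close> by (simp add: sum.delta)
  finally show ?thesis .
qed

context
  fixes e :: "'k ser \<Rightarrow> 'k ser"
  assumes de: "is_kderivation R e"
begin

lemma Delta_decomp:
  assumes x: "inR R x"
  shows "Ed e x - (\<Sum>i<n. Ed e (Xv i) * P i x)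
       = (\<Sum>j<n. Xv j * (Ed e (Gd j x) - (\<Sum>i<n. Ed e (Xv i) * P i (Gd j x))))"
proof -
  define c where "c = rep x (\<lambda>i. 0)"
  define G where "G j = Gd j x" for j
  define S where "S = (\<Sum>j<n. Xv j * G j)"
  have xd: "x = sc c + S" unfolding c_def S_def G_def by (rule decomp[OF x])
  have iG: "inR R (G j)" for j unfolding G_def by (rule inR_Gd[OF x])
  have iX: "j \<in> {..<n} \<Longrightarrow> inR R (Xv j * G j)" for j by (simp add: inR_mult inR_Xv iG)
  have iS: "inR R S" unfolding S_def using iX by (rule inR_sum)
  have E: "Ed e x = (\<Sum>j<n. Xv j * Ed e (G j) + Ed e (Xv j) * G j)"
  proof -
    have "Ed e x = Ed e (sc c + S)" using xd by (rule arg_cong)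
    also have "\<dots> = Ed e (sc c) + Ed e S" by (rule Ed_add[OF de inR_sc iS])
    also have "\<dots> = (\<Sum>j<n. Ed e (Xv j * G j))" unfolding S_def
      using Ed_sum[OF de, where A="{..<n}" and F="\<lambda>j. Xv j * G j"] iX by (simp add: Ed_sc[OF de])
    also have "\<dots> = (\<Sum>j<n. Xv j * Ed e (G j) + Ed e (Xv j) * G j)"
      by (rule sum.cong[OF refl]) (simp add: Ed_mult[OF de] inR_Xv iG)
    finally show ?thesis .
  qed
  have Pi: "P i x = (\<Sum>j<n. Xv j * P i (G j)) + G i" if i: "i < n" for i
  proof -
    have "P i x = P i (sc c + S)" using xd by (rule arg_cong)
    also have "\<dots> = (\<Sum>j<n. Xv j * P i (G j) + (if i = j then 1 else 0) * G j)"
      by (simp add: P_add P_sc S_def P_sum P_mult P_Xv)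
    also have "\<dots> = (\<Sum>j<n. Xv j * P i (G j)) + G i"
      by (simp add: sum.distrib sum_delta_mult[OF i])
    finally show ?thesis .
  qed
  have "(\<Sum>i<n. Ed e (Xv i) * P i x)
      = (\<Sum>i<n. Ed e (Xv i) * (\<Sum>j<n. Xv j * P i (G j))) + (\<Sum>i<n. Ed e (Xv i) * G i)"
    by (simp add: Pi distrib_left sum.distrib)
  also have "(\<Sum>i<n. Ed e (Xv i) * (\<Sum>j<n. Xv j * P i (G j)))
      = (\<Sum>j<n. Xv j * (\<Sum>i<n. Ed e (Xv i) * P i (G j)))"
    unfolding sum_distrib_left by (subst sum.swap) (simp add: mult.left_commute)
  finally have Phi: "(\<Sum>i<n. Ed e (Xv i) * P i x)
      = (\<Sum>j<n. Xv j * (\<Sum>i<n. Ed e (Xv i) * P i (G j))) + (\<Sum>i<n. Ed e (Xv i) * G i)" .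
  show ?thesis unfolding E Phi G_def[symmetric]
    by (simp add: sum.distrib right_diff_distrib sum_subtractf)
qed


lemma deg_upd:
  fixes \<gamma> :: "nat \<Rightarrow> nat"
  assumes "j < n" "\<gamma> j \<ge> 1"
  shows "(\<Sum>i<n. (\<gamma>(j := \<gamma> j - 1)) i) + 1 = (\<Sum>i<n. \<gamma> i)"
proof -
  have jn: "j \<in> {..<n}" using assms by simp
  have "(\<Sum>i<n. (\<gamma>(j := \<gamma> j - 1)) i) = (\<gamma> j - 1) + (\<Sum>i\<in>{..<n}-{j}. (\<gamma>(j := \<gamma> j - 1)) i)"
    using sum.remove[OF finite_lessThan jn, of "\<gamma>(j := \<gamma> j - 1)"] by (simp only: fun_upd_same)
  also have "(\<Sum>i\<in>{..<n}-{j}. (\<gamma>(j := \<gamma> j - 1)) i) = (\<Sum>i\<in>{..<n}-{j}. \<gamma> i)"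
    by (rule sum.cong) auto
  also have "(\<Sum>i<n. \<gamma> i) = \<gamma> j + (\<Sum>i\<in>{..<n}-{j}. \<gamma> i)"
    using sum.remove[OF finite_lessThan jn, of \<gamma>] by simp
  ultimately show ?thesis using assms(2) by arith
qed

lemma inR_Delta: "inR R x \<Longrightarrow> inR R (Ed e x - (\<Sum>i<n. Ed e (Xv i) * P i x))"
  by (intro inR_minus inR_Ed[OF de] inR_sum inR_mult inR_Xv inR_P) auto

lemma repr_aux:
  "\<forall>x. inR R x \<longrightarrow> (\<forall>\<gamma>. (\<Sum>i<n. \<gamma> i) < k \<longrightarrow> rep (Ed e x - (\<Sum>i<n. Ed e (Xv i) * P i x)) \<gamma> = 0)"
proof (induction k)
  case 0 thus ?case by simp
next
  case (Suc k)
  show ?case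
  proof (intro allI impI)
    fix x \<gamma> assume x: "inR R x" and dg: "(\<Sum>i<n. \<gamma> i) < Suc k"
    have "rep (Ed e x - (\<Sum>i<n. Ed e (Xv i) * P i x)) \<gamma>
      = (\<Sum>j<n. rep (Xv j * (Ed e (Gd j x) - (\<Sum>i<n. Ed e (Xv i) * P i (Gd j x)))) \<gamma>)"
      by (simp add: Delta_decomp[OF x] rep_sum)
    also have "\<dots> = 0"
    proof (rule sum.neutral, rule ballI)
      fix j assume j: "j \<in> {..<n}"
      show "rep (Xv j * (Ed e (Gd j x) - (\<Sum>i<n. Ed e (Xv i) * P i (Gd j x)))) \<gamma> = 0"
      proof (cases "\<gamma> j \<ge> 1")
        case True
        have "(\<Sum>i<n. (\<gamma>(j := \<gamma> j - 1)) i) < k" using deg_upd[of j \<gamma>] True j dg by simp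
        thus ?thesis using Suc.IH inR_Gd[OF x] True by (simp add: rep_Xv_mult)
      qed (simp add: rep_Xv_mult)
    qed
    finally show "rep (Ed e x - (\<Sum>i<n. Ed e (Xv i) * P i x)) \<gamma> = 0" .
  qed
qed

lemma repr: assumes x: "inR R x" shows "Ed e x = (\<Sum>i<n. Ed e (Xv i) * P i x)"
proof -
  have "rep (Ed e x - (\<Sum>i<n. Ed e (Xv i) * P i x)) \<gamma> = rep 0 \<gamma>" for \<gamma>
  proof (cases "\<gamma> \<in> exps n")
    case True
    thus ?thesis using repr_aux[of "(\<Sum>i<n. \<gamma> i) + 1"] x by (simp add: rep_zero s_zero_def)
  next
    case False
    thus ?thesis using R_exps[OF gR] inR_Delta[OF x] by (simp add: inR_def rep_zero s_zero_def)
  qed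
  hence "Ed e x - (\<Sum>i<n. Ed e (Xv i) * P i x) = 0" by (simp add: rep_inject[symmetric] fun_eq_iff)
  thus ?thesis by simp
qed

end

end


context
  fixes n :: nat and R :: "('k::field_char_0) ser set" and D :: "('k ser \<Rightarrow> 'k ser) set"
  assumes gR: "goodR n R" and n1: "n \<ge> 1"
    and hD: "\<forall>d\<in>D. is_kderivation R d"
    and hC: "pairwise_commuting R D"
    and hS: "D_simple R D"
    and h6: "\<forall>j<n - 1. \<exists>d\<in>D. \<forall>f\<in>R. d f = pd j f"
begin

lemma dD: "e \<in> D \<Longrightarrow> is_kderivation R e" using hD by blast

lemma comm: "e1 \<in> D \<Longrightarrow> e2 \<in> D \<Longrightarrow> inR R x \<Longrightarrow> Ed e1 (Ed e2 x) = Ed e2 (Ed e1 x)"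
proof -
  assume e: "e1 \<in> D" "e2 \<in> D" and x: "inR R x"
  have "rep (Ed e1 (Ed e2 x)) = e1 (e2 (rep x))"
    by (simp add: rep_Ed[OF gR dD[OF e(1)]] rep_Ed[OF gR dD[OF e(2)]] inR_Ed[OF gR dD[OF e(2)]] x)
  also have "\<dots> = e2 (e1 (rep x))" using hC e x by (simp add: pairwise_commuting_def inR_def)
  also have "\<dots> = rep (Ed e2 (Ed e1 x))"
    by (simp add: rep_Ed[OF gR dD[OF e(1)]] rep_Ed[OF gR dD[OF e(2)]] inR_Ed[OF gR dD[OF e(1)]] x)
  finally show ?thesis by (simp add: rep_inject)
qed

lemma P_as_D: assumes "j < n - 1" obtains dj where "dj \<in> D" "\<And>x. inR R x \<Longrightarrow> P j x = Ed dj x"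
proof -
  obtain dj where dj: "dj \<in> D" "\<forall>f\<in>R. dj f = pd j f" using h6 assms by blast
  have "P j x = Ed dj x" if "inR R x" for x
    using that dj by (simp add: rep_inject[symmetric] rep_P rep_Ed[OF gR dD[OF dj(1)]] inR_def)
  thus ?thesis using that dj(1) by blast
qed

lemma F4: assumes e: "e \<in> D" and j: "j < n - 1" shows "P j (Ed e (Xv (n - 1))) = 0"
proof -
  obtain dj where dj: "dj \<in> D" "\<And>x. inR R x \<Longrightarrow> P j x = Ed dj x" using P_as_D[OF j] by blast
  have iX: "inR R (Xv (n - 1))" using n1 by (intro inR_Xv[OF gR]) simp
  have "P j (Ed e (Xv (n - 1))) = Ed dj (Ed e (Xv (n - 1)))" by (rule dj(2)) (rule inR_Ed[OF gR dD[OF e] iX])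
  also have "\<dots> = Ed e (Ed dj (Xv (n - 1)))" by (rule comm[OF dj(1) e iX])
  also have "\<dots> = Ed e (P j (Xv (n - 1)))" using dj(2)[OF iX] by simp
  also have "\<dots> = 0" using j by (simp add: P_Xv Ed_zero[OF gR dD[OF e]])
  finally show ?thesis .
qed

lemma sum_split_n: "(\<Sum>i<n. F i) = (\<Sum>i<n - 1. F i) + F (n - 1)"
proof -
  have "n = Suc (n - 1)" using n1 by simp
  hence "{..<n} = insert (n - 1) {..<n - 1}" by (metis lessThan_Suc)
  thus ?thesis by (simp add: add.commute)
qed

lemma F5: assumes e: "e \<in> D" and y: "inR R y" and Py: "\<And>j. j < n - 1 \<Longrightarrow> P j y = 0"
  shows "Ed e y = Ed e (Xv (n - 1)) * P (n - 1) y"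
  using repr[OF gR dD[OF e] y] by (simp add: sum_split_n Py)


lemma ideal_contra:
  assumes a: "inR R a" and a0: "a \<noteq> 0" and nu: "\<And>u. inR R u \<Longrightarrow> a * u \<noteq> 1"
    and st: "\<And>e. e \<in> D \<Longrightarrow> \<exists>h. inR R h \<and> Ed e a = a * h"
  shows False
proof -
  define I where "I = {rep (a * g) | g. inR R g}"
  have idl: "is_ideal R I" unfolding is_ideal_def
  proof (intro conjI ballI)
    show "I \<subseteq> R" unfolding I_def using a by (auto simp: inR_def[symmetric] inR_mult[OF gR])
    show "s_zero \<in> I" unfolding I_def using inR_zero[OF gR] by (auto intro!: exI[of _ 0] simp: rep_zero)
  next
    fix f g assume "f \<in> I" "g \<in> I"
    then obtain x y where xy: "f = rep (a * x)" "g = rep (a * y)" "inR R x" "inR R y" unfolding I_def by blast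
    have "s_add f g = rep (a * (x + y))" by (simp add: xy rep_add distrib_left)
    thus "s_add f g \<in> I" unfolding I_def using xy inR_add[OF gR] by blast
  next
    fix r f assume r: "r \<in> R" and "f \<in> I"
    then obtain x where x: "f = rep (a * x)" "inR R x" unfolding I_def by blast
    have "rep (abs r * (a * x)) = s_mul r f" by (simp add: x rep_mult abs_R[OF gR r])
    hence "s_mul r f = rep (a * (abs r * x))" by (simp add: mult.left_commute)
    moreover have "inR R (abs r * x)" using inR_abs[OF gR r] x inR_mult[OF gR] by blast
    ultimately show "s_mul r f \<in> I" unfolding I_def by blast
  qed
  have stb: "D_stable D I" unfolding D_stable_def
  proof (intro ballI)
    fix e f assume e: "e \<in> D" and "f \<in> I"
    then obtain x where x: "f = rep (a * x)" "inR R x" unfolding I_def by blast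
    obtain h where h: "inR R h" "Ed e a = a * h" using st[OF e] by blast
    have "e f = rep (Ed e (a * x))" using x a by (simp add: rep_Ed[OF gR dD[OF e]] inR_mult[OF gR])
    also have "\<dots> = rep (a * (Ed e x + h * x))"
      by (simp add: Ed_mult[OF gR dD[OF e] a x(2)] h distrib_left mult.assoc)
    finally show "e f \<in> I" unfolding I_def using x(2) h(1)
      by (blast intro: inR_add[OF gR] inR_mult[OF gR] inR_Ed[OF gR dD[OF e]])
  qed
  have "I = {s_zero} \<or> I = R" using hS idl stb by (simp add: D_simple_def)
  moreover have "rep a \<in> I" unfolding I_def using inR_one[OF gR] by (auto intro!: exI[of _ 1])
  moreover have "rep a \<noteq> s_zero" using a0 by (simp add: rep_zero[symmetric] rep_inject)
  moreover have "s_one \<notin> I"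
  proof
    assume "s_one \<in> I"
    then obtain g where "s_one = rep (a * g)" "inR R g" unfolding I_def by blast
    hence "a * g = 1" by (simp add: rep_one[symmetric] rep_inject)
    thus False using nu \<open>inR R g\<close> by blast
  qed
  ultimately show False using R_one[OF gR] by blast
qed

lemma claim: "\<exists>d\<in>D. \<exists>u. inR R u \<and> Ed d (Xv (n - 1)) * u = 1"
proof (rule ccontr)
  assume ncl: "\<not> ?thesis"
  have iX: "inR R (Xv (n - 1))" using n1 by (intro inR_Xv[OF gR]) simp
  show False
  proof (cases "\<forall>e\<in>D. Ed e (Xv (n - 1)) = 0")
    case True
    show False
    proof (rule ideal_contra[OF iX])
      show "Xv (n - 1) \<noteq> (0::'k ms)"
      proof
        assume "Xv (n - 1) = (0::'k ms)"
        hence "rep (Xv (n - 1)) (ei (n - 1)) = (rep 0 (ei (n - 1)) :: 'k)" by simp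
        thus False by (simp add: rep_Xv rep_zero xser_def s_zero_def)
      qed
      fix u assume "inR R u"
      show "Xv (n - 1) * u \<noteq> 1"
      proof
        assume "Xv (n - 1) * u = 1"
        hence "rep (Xv (n - 1) * u) (\<lambda>i. 0) = rep (1::'k ms) (\<lambda>i. 0)" by simp
        thus False by (simp add: rep_Xv_mult rep_one s_one_def)
      qed
    next
      fix e assume "e \<in> D"
      thus "\<exists>h. inR R h \<and> Ed e (Xv (n - 1)) = Xv (n - 1) * h" using True inR_zero[OF gR] by auto
    qed
  next
    case False
    then obtain e0 where e0: "e0 \<in> D" "Ed e0 (Xv (n - 1)) \<noteq> 0" by blast
    let ?a = "Ed e0 (Xv (n - 1))"
    have ia: "inR R ?a" by (rule inR_Ed[OF gR dD[OF e0(1)] iX])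
    show False
    proof (rule ideal_contra[OF ia e0(2)])
      fix u assume "inR R u" thus "?a * u \<noteq> 1" using ncl e0(1) by blast
    next
      fix e assume e: "e \<in> D"
      have iy: "inR R (Ed e (Xv (n - 1)))" by (rule inR_Ed[OF gR dD[OF e] iX])
      have "Ed e ?a = Ed e0 (Ed e (Xv (n - 1)))" by (rule comm[OF e e0(1) iX])
      also have "\<dots> = ?a * P (n - 1) (Ed e (Xv (n - 1)))"
        by (rule F5[OF e0(1) iy F4[OF e]])
      finally show "\<exists>h. inR R h \<and> Ed e ?a = ?a * h" using inR_P[OF gR iy] by blast
    qed
  qed
qed


context
  fixes d u
  assumes d: "d \<in> D" and u: "inR R u" and du: "Ed d (Xv (n - 1)) * u = 1"
begin

lemma Pu: assumes j: "j < n - 1" shows "P j u = 0"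
proof -
  let ?a = "Ed d (Xv (n - 1))"
  have iX: "inR R (Xv (n - 1))" using n1 by (intro inR_Xv[OF gR]) simp
  have "0 = P j (?a * u)" by (simp only: du P_one)
  also have "\<dots> = ?a * P j u" by (simp only: P_mult F4[OF d j] mult_zero_left add_0_right)
  finally have "?a * P j u = 0" by simp
  hence "(u * ?a) * P j u = 0" by (simp add: mult.assoc)
  moreover have "u * ?a = 1" using du by (simp only: mult.commute)
  ultimately show ?thesis by simp
qed

lemma u_coeff: assumes j: "j < n - 1" and b: "\<beta> j \<ge> 1" shows "rep u \<beta> = 0"
proof -
  have "rep (P j u) (\<beta>(j := \<beta> j - 1)) = 0" by (simp add: Pu[OF j] rep_zero s_zero_def)
  moreover have "(\<beta>(j := \<beta> j - 1))(j := \<beta> j - 1 + 1) = \<beta>" using b by (auto simp: fun_eq_iff)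
  ultimately have "of_nat (\<beta> j) * rep u \<beta> = 0" using b by (simp add: rep_P pd_def)
  thus ?thesis using b by simp
qed

definition hfun :: "'k ser" where
  "hfun = (\<lambda>\<alpha>. if \<alpha> (n - 1) \<ge> 1 then rep u (\<alpha>(n - 1 := \<alpha> (n - 1) - 1)) / of_nat (\<alpha> (n - 1)) else 0)"

lemma hfun_R: "hfun \<in> R"
proof (rule R_intro[OF gR])
  fix \<alpha> :: "nat \<Rightarrow> nat" assume "\<alpha> \<notin> exps n"
  then obtain k where k: "k \<ge> n" "\<alpha> k \<noteq> 0" by (auto simp: exps_def)
  have "k \<noteq> n - 1" using k n1 by simp
  hence "\<alpha>(n - 1 := \<alpha> (n - 1) - 1) \<notin> exps n" using k by (auto simp: exps_def)
  thus "hfun \<alpha> = 0" using R_exps[OF gR] u by (simp add: hfun_def inR_def)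
next
  assume "R = poly_carrier n"
  hence fin: "finite {\<alpha>. rep u \<alpha> \<noteq> 0}" using u R_fin[OF gR] by (simp add: inR_def)
  have "{\<alpha>. hfun \<alpha> \<noteq> 0} \<subseteq> (\<lambda>\<beta>. \<beta>(n - 1 := \<beta> (n - 1) + 1)) ` {\<alpha>. rep u \<alpha> \<noteq> 0}"
  proof
    fix \<alpha> assume "\<alpha> \<in> {\<alpha>. hfun \<alpha> \<noteq> 0}"
    hence h: "\<alpha> (n - 1) \<ge> 1" "rep u (\<alpha>(n - 1 := \<alpha> (n - 1) - 1)) \<noteq> 0" by (auto simp: hfun_def split: if_splits)
    thus "\<alpha> \<in> (\<lambda>\<beta>. \<beta>(n - 1 := \<beta> (n - 1) + 1)) ` {\<alpha>. rep u \<alpha> \<noteq> 0}"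
      by (intro image_eqI[of _ _ "\<alpha>(n - 1 := \<alpha> (n - 1) - 1)"]) (auto simp: fun_eq_iff)
  qed
  thus "finite {\<alpha>. hfun \<alpha> \<noteq> 0}" using fin finite_subset by blast
qed

definition Hm :: "'k ms" where "Hm = abs hfun"

lemma inR_Hm: "inR R Hm" unfolding Hm_def by (rule inR_abs[OF gR hfun_R])
lemma rep_Hm: "rep Hm = hfun" unfolding Hm_def by (rule abs_R[OF gR hfun_R])

lemma P_Hm_m: "P (n - 1) Hm = u"
proof -
  have "pd (n - 1) hfun \<alpha> = rep u \<alpha>" for \<alpha>
  proof -
    have "(\<alpha>(n - 1 := \<alpha> (n - 1) + 1))(n - 1 := \<alpha> (n - 1) + 1 - 1) = \<alpha>" by (auto simp: fun_eq_iff)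
    hence "hfun (\<alpha>(n - 1 := \<alpha> (n - 1) + 1)) = rep u \<alpha> / of_nat (\<alpha> (n - 1) + 1)" by (simp add: hfun_def)
    thus ?thesis unfolding pd_def by (simp del: of_nat_Suc)
  qed
  thus ?thesis by (simp add: rep_inject[symmetric] rep_P rep_Hm fun_eq_iff)
qed

lemma P_Hm_j: assumes j: "j < n - 1" shows "P j Hm = 0"
proof -
  have "pd j hfun \<alpha> = 0" for \<alpha>
  proof (cases "\<alpha> (n - 1) \<ge> 1")
    case True
    let ?b = "(\<alpha>(j := \<alpha> j + 1))(n - 1 := \<alpha> (n - 1) - 1)"
    have "rep u ?b = 0" using j by (intro u_coeff[OF j]) simp
    thus ?thesis using True j by (simp add: pd_def hfun_def)
  next
    case False thus ?thesis using j by (simp add: pd_def hfun_def)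
  qed
  thus ?thesis by (simp add: rep_inject[symmetric] rep_P rep_Hm rep_zero s_zero_def fun_eq_iff)
qed

lemma Ed_Hm: "Ed d Hm = 1"
proof -
  have "Ed d Hm = Ed d (Xv (n - 1)) * P (n - 1) Hm" by (rule F5[OF d inR_Hm P_Hm_j])
  thus ?thesis by (simp only: P_Hm_m du)
qed


lemma simple': "D_simple R (insert d (pd ` {..<n - 1}))"
  unfolding D_simple_def
proof (intro allI impI)
  fix I assume "is_ideal R I \<and> D_stable (insert d (pd ` {..<n - 1})) I"
  hence idl: "is_ideal R I" and st: "D_stable (insert d (pd ` {..<n - 1})) I" by auto
  have IR: "I \<subseteq> R" and I0: "s_zero \<in> I" and Iadd: "\<And>f g. f \<in> I \<Longrightarrow> g \<in> I \<Longrightarrow> s_add f g \<in> I"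
    and Imul: "\<And>r f. r \<in> R \<Longrightarrow> f \<in> I \<Longrightarrow> s_mul r f \<in> I"
    using idl by (auto simp: is_ideal_def)
  define J where "J x \<longleftrightarrow> inR R x \<and> rep x \<in> I" for x
  have J0: "J 0" unfolding J_def by (simp add: inR_zero[OF gR] rep_zero I0)
  have Jadd: "J x \<Longrightarrow> J y \<Longrightarrow> J (x + y)" for x y
    unfolding J_def by (simp add: inR_add[OF gR] rep_add Iadd)
  have Jmul: "inR R r \<Longrightarrow> J x \<Longrightarrow> J (r * x)" for r x
    unfolding J_def by (simp add: inR_mult[OF gR] rep_mult Imul inR_def R_mul[OF gR])
  have Jneg: "J x \<Longrightarrow> J (- x)" for x
  proof -
    assume "J x"
    moreover have "inR R (- 1)" by (rule inR_uminus[OF gR inR_one[OF gR]])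
    ultimately have "J (- 1 * x)" by (rule Jmul[rotated])
    thus ?thesis by simp
  qed
  have Jminus: "J x \<Longrightarrow> J y \<Longrightarrow> J (x - y)" for x y
    using Jadd[of x "- y"] Jneg[of y] by simp
  have Jsum: "(\<And>a. a \<in> A \<Longrightarrow> J (F a)) \<Longrightarrow> J (sum F A)" for A and F :: "nat \<Rightarrow> 'k ms"
    by (induction A rule: infinite_finite_induct) (simp_all add: J0 Jadd)
  have "D_stable D I" unfolding D_stable_def
  proof (intro ballI)
    fix e f assume e: "e \<in> D" and f: "f \<in> I"
    have fR: "f \<in> R" using f IR by blast
    define x where "x = abs f"
    have rx: "rep x = f" unfolding x_def by (rule abs_R[OF gR fR])
    have ix: "inR R x" using rx fR by (simp add: inR_def)
    have JP: "J (P j x)" if "j < n - 1" for j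
    proof -
      have "pd j \<in> insert d (pd ` {..<n - 1})" using that by simp
      hence "pd j f \<in> I" using st f unfolding D_stable_def by blast
      thus ?thesis unfolding J_def by (simp add: rep_P rx inR_P[OF gR ix])
    qed
    have JE: "J (Ed d x)"
    proof -
      have "d f \<in> I" using st f by (simp add: D_stable_def)
      thus ?thesis unfolding J_def by (simp add: rep_Ed[OF gR dD[OF d] ix] rx inR_Ed[OF gR dD[OF d] ix])
    qed
    let ?a = "Ed d (Xv (n - 1))"
    have rd: "Ed d x = (\<Sum>i<n - 1. Ed d (Xv i) * P i x) + ?a * P (n - 1) x"
      using repr[OF gR dD[OF d] ix] by (simp only: sum_split_n)
    have "P (n - 1) x = (u * ?a) * P (n - 1) x" using du by (simp add: mult.commute)
    also have "\<dots> = u * (Ed d x - (\<Sum>i<n - 1. Ed d (Xv i) * P i x))" by (simp add: rd mult.assoc)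
    finally have Pm: "J (P (n - 1) x)"
      by (simp only:) (intro Jmul[OF u] Jminus JE Jsum Jmul inR_Ed[OF gR dD[OF d]] inR_Xv[OF gR] JP; simp)
    have JPall: "J (P i x)" if "i < n" for i
      using that JP Pm by (cases "i = n - 1") auto
    have "J (Ed e x)"
      unfolding repr[OF gR dD[OF e] ix]
      by (intro Jsum Jmul inR_Ed[OF gR dD[OF e]] inR_Xv[OF gR] JPall; simp)
    thus "e f \<in> I" unfolding J_def by (simp add: rep_Ed[OF gR dD[OF e] ix] rx)
  qed
  thus "I = {s_zero} \<or> I = R" using hS idl by (simp add: D_simple_def)
qed

lemma main_du: "\<exists>fs :: nat \<Rightarrow> 'k ser.
           (\<forall>i<n. fs i \<in> R) \<and>
           d (fs (n - 1)) = s_one \<and>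
           (\<forall>i<n - 1. d (fs i) = s_zero) \<and>
           D_simple R (insert d (pd ` {..<n - 1}))"
proof (intro exI[of _ "\<lambda>i. if i = n - 1 then rep Hm else s_zero"] conjI allI impI)
  fix i show "i < n \<Longrightarrow> (if i = n - 1 then rep Hm else s_zero) \<in> R"
    using R_zero[OF gR] hfun_R by (simp add: rep_Hm)
next
  show "d (if n - 1 = n - 1 then rep Hm else s_zero) = s_one"
    using rep_Ed[OF gR dD[OF d] inR_Hm] by (simp add: Ed_Hm rep_one)
next
  fix i assume "i < n - 1"
  have "d s_zero = rep (Ed d 0)" using rep_Ed[OF gR dD[OF d] inR_zero[OF gR]] by (simp add: rep_zero)
  also have "\<dots> = s_zero" by (simp add: Ed_zero[OF gR dD[OF d]] rep_zero)
  finally show "d (if i = n - 1 then rep Hm else s_zero) = s_zero" using \<open>i < n - 1\<close> by simp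
next
  show "D_simple R (insert d (pd ` {..<n - 1}))" by (rule simple')
qed

end

lemma main: "\<exists>d\<in>D. \<exists>fs :: nat \<Rightarrow> 'k ser.
           (\<forall>i<n. fs i \<in> R) \<and>
           d (fs (n - 1)) = s_one \<and>
           (\<forall>i<n - 1. d (fs i) = s_zero) \<and>
           D_simple R (insert d (pd ` {..<n - 1}))"
proof -
  obtain d u where duu: "d \<in> D" "inR R u" "Ed d (Xv (n - 1)) * u = 1" using claim by blast
  show ?thesis using main_du[OF duu] duu(1) by blast
qed

end


theorem corollary2p5:
  fixes n :: nat and R :: "('k::field_char_0) ser set"
    and D :: "('k ser \<Rightarrow> 'k ser) set"
  assumes "n \<ge> 1"
    and "R = poly_carrier n \<or> R = ps_carrier n"
    and "\<forall>d\<in>D. is_kderivation R d"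
    and "pairwise_commuting R D"
    and "D_simple R D"
    and "\<forall>j<n - 1. \<exists>d\<in>D. \<forall>f\<in>R. d f = pd j f"
  shows "\<exists>d\<in>D. \<exists>fs :: nat \<Rightarrow> 'k ser.
           (\<forall>i<n. fs i \<in> R) \<and>
           d (fs (n - 1)) = s_one \<and>
           (\<forall>i<n - 1. d (fs i) = s_zero) \<and>
           D_simple R (insert d (pd ` {..<n - 1}))"
proof -
  have gR: "goodR n R" using assms(2) by (simp add: goodR_def)
  show ?thesis by (rule main[OF gR assms(1) assms(3) assms(4) assms(5) assms(6)])
qed

end
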